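(* Fix an integer $k\ge2$. For each $3$-element subset $A=\{a,b,c\}$ of $\{0,1,\dots,k\}$ with $a<b<c$, let $\rho_A$ be the polymatroid on a $2$-element set $\{e,f\}$ given by $\rho_A(\emptyset)=0$, $\rho_A(\{e\})=b$, $\rho_A(\{f\})=c$, $\rho_A(\{e,f\})=a+c$. Then a $k$-polymatroid is an excluded minor for $\mathcal{Q}_k$ within the class of $k$-polymatroids (i.e., it is not in $\mathcal{Q}_k$ but all of its proper minors are) if and only if it is isomorphic to $\rho_A$ for some such $A$; thus $\mathcal{Q}_k$ has exactly $\binom{k+1}{3}$ excluded minors within the class of $k$-polymatroids.
   Context: A polymatroid on a finite set $E$ is a function $\rho:2^E\to\mathbb{Z}$ that is normalized, non-decreasing and submodular; it is a $k$-polymatroid if $\rho(\{e\})\le k$ for all $e$. For matroids $Q,L$ on $E$, $Q$ is a quotient of $L$ if there is a matroid $M$ and $A\subseteq E(M)$ with $L=M\backslash A$ and $Q=M/A$ (equivalently, $r_L-r_Q$ is non-decreasing). $\mathcal{Q}_k$ is the class of polymatroids of the form $r_{M_1}+\cdots+r_{M_k}$ where each $M_{i+1}$ ($i\in[k-1]$) is a quotient of (possibly equal to) $M_i$. Minors: $\rho_{\backslash A}(X)=\rho(X)$, $\rho_{/A}(X)=\rho(X\cup A)-\rho(A)$ for $X\subseteq E-A$; minors are $(\rho_{\backslash A})_{/B}$ for disjoint $A,B$, proper if $A\cup B\ne\emptyset$. Polymatroids are isomorphic if a bijection of ground sets preserves the rank function. *)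

theory Defs
  imports Main
begin

definition polymatroid :: "'a set \<Rightarrow> ('a set \<Rightarrow> int) \<Rightarrow> bool" where
  "polymatroid E \<rho> \<longleftrightarrow> finite E \<and> \<rho> {} = 0
     \<and> (\<forall>X Y. X \<subseteq> Y \<and> Y \<subseteq> E \<longrightarrow> \<rho> X \<le> \<rho> Y)
     \<and> (\<forall>X Y. X \<subseteq> E \<and> Y \<subseteq> E \<longrightarrow> \<rho> (X \<union> Y) + \<rho> (X \<inter> Y) \<le> \<rho> X + \<rho> Y)"

definition k_polymatroid :: "nat \<Rightarrow> 'a set \<Rightarrow> ('a set \<Rightarrow> int) \<Rightarrow> bool" where
  "k_polymatroid k E \<rho> \<longleftrightarrow> polymatroid E \<rho> \<and> (\<forall>e\<in>E. \<rho> {e} \<le> int k)"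

definition matroid_rank :: "'a set \<Rightarrow> ('a set \<Rightarrow> int) \<Rightarrow> bool" where
  "matroid_rank E r \<longleftrightarrow> finite E
     \<and> (\<forall>X. X \<subseteq> E \<longrightarrow> 0 \<le> r X \<and> r X \<le> int (card X))
     \<and> (\<forall>X Y. X \<subseteq> Y \<and> Y \<subseteq> E \<longrightarrow> r X \<le> r Y)
     \<and> (\<forall>X Y. X \<subseteq> E \<and> Y \<subseteq> E \<longrightarrow> r (X \<union> Y) + r (X \<inter> Y) \<le> r X + r Y)"

text \<open>Q is a quotient of L (both matroids on E): there is a matroid M on
  E plus extra elements A (encoded as Inr ` A, A a finite set of naturals, the
  elements of E being encoded as Inl ` E) with L = M \ A and Q = M / A.\<close>
definition quotient :: "'a set \<Rightarrow> ('a set \<Rightarrow> int) \<Rightarrow> ('a set \<Rightarrow> int) \<Rightarrow> bool" where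
  "quotient E rQ rL \<longleftrightarrow> matroid_rank E rQ \<and> matroid_rank E rL \<and>
     (\<exists>(A :: nat set) (rM :: ('a + nat) set \<Rightarrow> int).
        finite A \<and> matroid_rank (Inl ` E \<union> Inr ` A) rM
        \<and> (\<forall>X. X \<subseteq> E \<longrightarrow> rL X = rM (Inl ` X))
        \<and> (\<forall>X. X \<subseteq> E \<longrightarrow> rQ X = rM (Inl ` X \<union> Inr ` A) - rM (Inr ` A)))"

definition in_Qk :: "nat \<Rightarrow> 'a set \<Rightarrow> ('a set \<Rightarrow> int) \<Rightarrow> bool" where
  "in_Qk k E \<rho> \<longleftrightarrow> (\<exists>M :: nat \<Rightarrow> ('a set \<Rightarrow> int).
      (\<forall>i\<in>{1..k}. matroid_rank E (M i))
      \<and> (\<forall>i\<in>{1..k-1}. quotient E (M (Suc i)) (M i))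
      \<and> (\<forall>X. X \<subseteq> E \<longrightarrow> \<rho> X = (\<Sum>i=1..k. M i X)))"

text \<open>The minor (rho \ A) / B, a polymatroid on E - (A \<union> B).\<close>
definition minor_rank :: "('a set \<Rightarrow> int) \<Rightarrow> 'a set \<Rightarrow> 'a set \<Rightarrow> int" where
  "minor_rank \<rho> B X = \<rho> (X \<union> B) - \<rho> B"

definition excluded_minor_Qk :: "nat \<Rightarrow> 'a set \<Rightarrow> ('a set \<Rightarrow> int) \<Rightarrow> bool" where
  "excluded_minor_Qk k E \<rho> \<longleftrightarrow> k_polymatroid k E \<rho> \<and> \<not> in_Qk k E \<rho>
     \<and> (\<forall>A B. A \<subseteq> E \<and> B \<subseteq> E \<and> A \<inter> B = {} \<and> A \<union> B \<noteq> {}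
            \<longrightarrow> in_Qk k (E - (A \<union> B)) (minor_rank \<rho> B))"

definition poly_iso :: "'a set \<Rightarrow> ('a set \<Rightarrow> int) \<Rightarrow> 'b set \<Rightarrow> ('b set \<Rightarrow> int) \<Rightarrow> bool" where
  "poly_iso E \<rho> E' \<rho>' \<longleftrightarrow> (\<exists>\<phi>. bij_betw \<phi> E E' \<and> (\<forall>X. X \<subseteq> E \<longrightarrow> \<rho> X = \<rho>' (\<phi> ` X)))"

text \<open>rho_A on the ground set {e, f} = UNIV :: bool set, with e = True, f = False.\<close>
definition rhoA :: "nat \<Rightarrow> nat \<Rightarrow> nat \<Rightarrow> bool set \<Rightarrow> int" where
  "rhoA a b c X = (if X = {} then 0 else if X = {True} then int b
                   else if X = {False} then int c else int a + int c)"

end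

theory Submission
  imports Defs
begin


lemma mono_from_marg:
  assumes marg: "\<And>X x. X \<subseteq> E \<Longrightarrow> x \<in> E \<Longrightarrow> x \<notin> X \<Longrightarrow> (g X :: int) \<le> g (insert x X)"
    and fin: "finite E" and XY: "X \<subseteq> Y" and YE: "Y \<subseteq> E"
  shows "g X \<le> g Y"
proof -
  have fS: "finite (Y - X)" using finite_subset[OF _ fin] YE by blast
  have main: "g X \<le> g (X \<union> S)" if "finite S" "S \<subseteq> Y - X" for S
    using that
  proof (induction S rule: finite_induct)
    case empty thus ?case by simp
  next
    case (insert s S)
    have a: "X \<union> S \<subseteq> E" using insert.prems XY YE by blast
    have b: "s \<in> E" using insert.prems YE by blast
    have c: "s \<notin> X \<union> S" using insert.prems insert.hyps(2) by blast
    have "g (X \<union> S) \<le> g (insert s (X \<union> S))" by (rule marg[OF a b c])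
    moreover have "g X \<le> g (X \<union> S)" using insert.IH insert.prems by blast
    ultimately show ?case by simp
  qed
  have "X \<union> (Y - X) = Y" using XY by blast
  thus ?thesis using main[OF fS] by simp
qed

lemma dimret_from_marg:
  assumes loc: "\<And>X Y x. X \<subseteq> Y \<Longrightarrow> Y \<subseteq> E \<Longrightarrow> x \<in> E \<Longrightarrow> x \<notin> Y \<Longrightarrow>
       (f (insert x Y) :: int) - f Y \<le> f (insert x X) - f X"
    and fS: "finite S" and SE: "S \<subseteq> E - Y" and XY: "X \<subseteq> Y" and YE: "Y \<subseteq> E"
  shows "f (Y \<union> S) - f Y \<le> f (X \<union> S) - f X"
  using fS SE
proof (induction S rule: finite_induct)
  case empty thus ?case by simp
next
  case (insert s S)
  have a: "X \<union> S \<subseteq> Y \<union> S" using XY by blast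
  have b: "Y \<union> S \<subseteq> E" using insert.prems YE by blast
  have c: "s \<in> E" using insert.prems by blast
  have d: "s \<notin> Y \<union> S" using insert.prems insert.hyps(2) by blast
  have "f (insert s (Y \<union> S)) - f (Y \<union> S) \<le> f (insert s (X \<union> S)) - f (X \<union> S)"
    by (rule loc[OF a b c d])
  moreover have "f (Y \<union> S) - f Y \<le> f (X \<union> S) - f X" using insert.IH insert.prems by blast
  ultimately show ?case by simp
qed

lemma matroid_from_marg:
  assumes fin: "finite E" and f0: "f {} = 0"
    and m01: "\<And>X x. X \<subseteq> E \<Longrightarrow> x \<in> E \<Longrightarrow> x \<notin> X \<Longrightarrow>
       f (insert x X) = f X \<or> f (insert x X) = f X + 1"
    and loc: "\<And>X Y x. X \<subseteq> Y \<Longrightarrow> Y \<subseteq> E \<Longrightarrow> x \<in> E \<Longrightarrow> x \<notin> Y \<Longrightarrow>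
       (f (insert x Y) :: int) - f Y \<le> f (insert x X) - f X"
  shows "matroid_rank E f"
proof -
  have b: "0 \<le> f X \<and> f X \<le> int (card X)" if XE: "X \<subseteq> E" for X
  proof -
    have "finite X" using finite_subset[OF XE fin] .
    thus ?thesis using XE
    proof (induction X rule: finite_induct)
      case empty thus ?case using f0 by simp
    next
      case (insert x X)
      have "X \<subseteq> E" "x \<in> E" using insert.prems by auto
      hence "f (insert x X) = f X \<or> f (insert x X) = f X + 1" using m01 insert.hyps(2) by blast
      moreover have "0 \<le> f X \<and> f X \<le> int (card X)" using insert.IH \<open>X \<subseteq> E\<close> by blast
      moreover have "card (insert x X) = Suc (card X)" using insert.hyps by simp
      ultimately show ?case by auto
    qed
  qed
  have mg: "f Z \<le> f (insert x Z)" if "Z \<subseteq> E" "x \<in> E" "x \<notin> Z" for Z x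
    using m01[OF that] by auto
  have mo: "f X \<le> f Y" if "X \<subseteq> Y" "Y \<subseteq> E" for X Y
    by (rule mono_from_marg[where g=f, OF mg fin that])
  have sm: "f (X \<union> Y) + f (X \<inter> Y) \<le> f X + f Y" if XE: "X \<subseteq> E" and YE: "Y \<subseteq> E" for X Y
  proof -
    have fS: "finite (X - Y)" using finite_subset[OF _ fin] XE by blast
    have s1: "X - Y \<subseteq> E - Y" using XE by blast
    have s2: "X \<inter> Y \<subseteq> Y" by blast
    have "f (Y \<union> (X - Y)) - f Y \<le> f ((X \<inter> Y) \<union> (X - Y)) - f (X \<inter> Y)"
      by (rule dimret_from_marg[where f=f, OF loc fS s1 s2 YE])
    moreover have "Y \<union> (X - Y) = X \<union> Y" "(X \<inter> Y) \<union> (X - Y) = X" by auto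
    ultimately show ?thesis by simp
  qed
  show ?thesis unfolding matroid_rank_def
  proof (intro conjI allI impI)
    fix X assume "X \<subseteq> E" thus "0 \<le> f X" using b by blast
  next
    fix X assume "X \<subseteq> E" thus "f X \<le> int (card X)" using b by blast
  next
    fix X Y assume "X \<subseteq> Y \<and> Y \<subseteq> E" thus "f X \<le> f Y" using mo by blast
  next
    fix X Y assume "X \<subseteq> E \<and> Y \<subseteq> E" thus "f (X \<union> Y) + f (X \<inter> Y) \<le> f X + f Y" using sm by blast
  qed (rule fin)
qed

lemma min_submod_arith:
  fixes fU fI fS fT gU gI gS gT :: int
  assumes "fU + fI \<le> fS + fT" "gU + gI \<le> gS + gT" "fI - gI \<le> fS - gS" "fI - gI \<le> fT - gT"
  shows "min fU gU + min fI gI \<le> min fS gS + min fT gT"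
  using assms unfolding min_def by auto



lemma matroid_props:
  assumes "matroid_rank E r"
  shows "finite E" "\<And>X. X \<subseteq> E \<Longrightarrow> 0 \<le> r X" "\<And>X. X \<subseteq> E \<Longrightarrow> r X \<le> int (card X)"
    "\<And>X Y. X \<subseteq> Y \<Longrightarrow> Y \<subseteq> E \<Longrightarrow> r X \<le> r Y"
    "\<And>X Y. X \<subseteq> E \<Longrightarrow> Y \<subseteq> E \<Longrightarrow> r (X \<union> Y) + r (X \<inter> Y) \<le> r X + r Y"
  using assms unfolding matroid_rank_def by blast+

lemma matroid_empty: "matroid_rank E r \<Longrightarrow> r {} = 0"
  using matroid_props(2,3)[of E r "{}"] by simp

lemma matroid_marg:
  assumes M: "matroid_rank E r" and BE: "B \<subseteq> E" and xE: "x \<in> E"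
  shows "r B \<le> r (insert x B) \<and> r (insert x B) \<le> r B + 1"
proof -
  have "r (B \<union> {x}) + r (B \<inter> {x}) \<le> r B + r {x}" using matroid_props(5)[OF M BE] xE by blast
  moreover have "0 \<le> r (B \<inter> {x})" using matroid_props(2)[OF M] BE by blast
  moreover have "r {x} \<le> 1" using matroid_props(3)[OF M, of "{x}"] xE by simp
  moreover have "r B \<le> r (insert x B)" using matroid_props(4)[OF M] BE xE by blast
  ultimately show ?thesis by simp
qed

lemma quotient_D:
  assumes q: "quotient E rQ rL" and XY: "X \<subseteq> Y" and YE: "Y \<subseteq> E"
  shows "rL X - rQ X \<le> rL Y - rQ Y"
proof -
  obtain A :: "nat set" and rM where M: "matroid_rank (Inl ` E \<union> Inr ` A) rM"
    and L: "\<And>X. X \<subseteq> E \<Longrightarrow> rL X = rM (Inl ` X)"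
    and Q: "\<And>X. X \<subseteq> E \<Longrightarrow> rQ X = rM (Inl ` X \<union> Inr ` A) - rM (Inr ` A)"
    using q unfolding quotient_def by blast
  have XE: "X \<subseteq> E" using XY YE by blast
  have s1: "Inl ` Y \<subseteq> Inl ` E \<union> Inr ` A" "Inl ` X \<union> Inr ` A \<subseteq> Inl ` E \<union> Inr ` A" using YE XE by blast+
  have "rM (Inl ` Y \<union> (Inl ` X \<union> Inr ` A)) + rM (Inl ` Y \<inter> (Inl ` X \<union> Inr ` A))
        \<le> rM (Inl ` Y) + rM (Inl ` X \<union> Inr ` A)"
    by (rule matroid_props(5)[OF M s1])
  moreover have "Inl ` Y \<union> (Inl ` X \<union> Inr ` A) = Inl ` Y \<union> Inr ` A" using XY by blast
  moreover have "Inl ` Y \<inter> (Inl ` X \<union> Inr ` A) = Inl ` X" using XY by blast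
  ultimately show ?thesis using L[OF XE] L[OF YE] Q[OF XE] Q[OF YE] by simp
qed

lemma quotient_intro:
  assumes MQr: "matroid_rank E rQ" and MLr: "matroid_rank E rL"
    and D: "\<And>X Y. X \<subseteq> Y \<Longrightarrow> Y \<subseteq> E \<Longrightarrow> rL X - rQ X \<le> rL Y - rQ Y"
  shows "quotient E rQ rL"
proof -
  define d where "d = nat (rL E - rQ E)"
  define A where "A = {..<d}"
  define Lp :: "('a + nat) set \<Rightarrow> 'a set" where "Lp Z = {x. Inl x \<in> Z}" for Z
  define Rp :: "('a + nat) set \<Rightarrow> nat set" where "Rp Z = {n. Inr n \<in> Z}" for Z
  define f where "f Z = rL (Lp Z) + int (card (Rp Z))" for Z
  define g where "g Z = rQ (Lp Z) + int d" for Z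
  define rM where "rM Z = min (f Z) (g Z)" for Z
  define G where "G = Inl ` E \<union> Inr ` A"
  have finE: "finite E" using matroid_props(1)[OF MLr] .
  have L0: "rL {} = 0" and Q0: "rQ {} = 0" using matroid_empty MQr MLr by blast+
  have DE: "rL E - rQ E \<ge> 0" using D[of "{}" E] L0 Q0 by simp
  have dE: "int d = rL E - rQ E" using DE unfolding d_def by simp
  have finA: "finite A" unfolding A_def by simp
  have cardA: "card A = d" unfolding A_def by simp
  have LpG: "Lp Z \<subseteq> E" and RpG: "Rp Z \<subseteq> A" if "Z \<subseteq> G" for Z
    using that unfolding Lp_def Rp_def G_def by auto
  have Zsplit: "Z = Inl ` Lp Z \<union> Inr ` Rp Z" for Z
    unfolding Lp_def Rp_def by (auto; case_tac x; auto)
  have cardZ: "card Z = card (Lp Z) + card (Rp Z)" if "Z \<subseteq> G" for Z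
  proof -
    have "finite (Lp Z)" "finite (Rp Z)" using LpG[OF that] RpG[OF that] finE finA finite_subset by blast+
    hence "card (Inl ` Lp Z \<union> Inr ` Rp Z) = card (Inl ` Lp Z :: ('a + nat) set) + card (Inr ` Rp Z :: ('a + nat) set)"
      by (subst card_Un_disjoint) auto
    also have "\<dots> = card (Lp Z) + card (Rp Z)" by (simp add: card_image)
    finally show ?thesis using Zsplit[of Z] by simp
  qed
  have LpUn: "Lp (Z1 \<union> Z2) = Lp Z1 \<union> Lp Z2" and LpInt: "Lp (Z1 \<inter> Z2) = Lp Z1 \<inter> Lp Z2"
    and RpUn: "Rp (Z1 \<union> Z2) = Rp Z1 \<union> Rp Z2" and RpInt: "Rp (Z1 \<inter> Z2) = Rp Z1 \<inter> Rp Z2" for Z1 Z2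
    unfolding Lp_def Rp_def by auto
  have Lpmono: "Lp Z1 \<subseteq> Lp Z2" and Rpmono: "Rp Z1 \<subseteq> Rp Z2" if "Z1 \<subseteq> Z2" for Z1 Z2
    using that unfolding Lp_def Rp_def by auto
  have Mr: "matroid_rank G rM" unfolding matroid_rank_def
  proof (intro conjI allI impI)
    show "finite G" unfolding G_def using finE finA by simp
  next
    fix Z assume Z: "Z \<subseteq> G"
    have "0 \<le> rL (Lp Z)" "0 \<le> rQ (Lp Z)" using matroid_props(2)[OF MLr] matroid_props(2)[OF MQr] LpG[OF Z] by auto
    thus "0 \<le> rM Z" unfolding rM_def f_def g_def by simp
  next
    fix Z assume Z: "Z \<subseteq> G"
    have "rL (Lp Z) \<le> int (card (Lp Z))" using matroid_props(3)[OF MLr] LpG[OF Z] by auto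
    thus "rM Z \<le> int (card Z)" unfolding rM_def f_def using cardZ[OF Z] by simp
  next
    fix Z1 Z2 assume Z: "Z1 \<subseteq> Z2 \<and> Z2 \<subseteq> G"
    have "rL (Lp Z1) \<le> rL (Lp Z2)" "rQ (Lp Z1) \<le> rQ (Lp Z2)"
      using matroid_props(4)[OF MLr] matroid_props(4)[OF MQr] Lpmono[of Z1 Z2] LpG[of Z2] Z by auto
    moreover have "card (Rp Z1) \<le> card (Rp Z2)"
      using Rpmono[of Z1 Z2] RpG[of Z2] Z finA by (meson card_mono finite_subset)
    ultimately show "rM Z1 \<le> rM Z2" unfolding rM_def f_def g_def by linarith
  next
    fix S T assume Z: "S \<subseteq> G \<and> T \<subseteq> G"
    hence SG: "S \<subseteq> G" and TG: "T \<subseteq> G" by auto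
    have fR: "finite (Rp S)" "finite (Rp T)" using RpG[OF SG] RpG[OF TG] finA finite_subset by blast+
    have c1: "card (Rp S \<union> Rp T) + card (Rp S \<inter> Rp T) = card (Rp S) + card (Rp T)"
      using card_Un_Int[OF fR] by simp
    have c2: "card (Rp S \<inter> Rp T) \<le> card (Rp S)" "card (Rp S \<inter> Rp T) \<le> card (Rp T)"
      using fR by (auto intro: card_mono)
    have l1: "rL (Lp S \<union> Lp T) + rL (Lp S \<inter> Lp T) \<le> rL (Lp S) + rL (Lp T)"
      using matroid_props(5)[OF MLr LpG[OF SG] LpG[OF TG]] .
    have l2: "rQ (Lp S \<union> Lp T) + rQ (Lp S \<inter> Lp T) \<le> rQ (Lp S) + rQ (Lp T)"
      using matroid_props(5)[OF MQr LpG[OF SG] LpG[OF TG]] .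
    have l3: "rL (Lp S \<inter> Lp T) - rQ (Lp S \<inter> Lp T) \<le> rL (Lp S) - rQ (Lp S)"
      using D[of "Lp S \<inter> Lp T" "Lp S"] LpG[OF SG] by blast
    have l4: "rL (Lp S \<inter> Lp T) - rQ (Lp S \<inter> Lp T) \<le> rL (Lp T) - rQ (Lp T)"
      using D[of "Lp S \<inter> Lp T" "Lp T"] LpG[OF TG] by blast
    show "rM (S \<union> T) + rM (S \<inter> T) \<le> rM S + rM T"
      unfolding rM_def f_def g_def LpUn LpInt RpUn RpInt
      by (rule min_submod_arith) (use c1 c2 l1 l2 l3 l4 in linarith)+
  qed
  have LX: "rL X = rM (Inl ` X)" if X: "X \<subseteq> E" for X
  proof -
    have "Lp (Inl ` X) = X" "Rp (Inl ` X) = {}" unfolding Lp_def Rp_def by auto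
    moreover have "rL X - rQ X \<le> int d" using D[OF X subset_refl] dE by simp
    ultimately show ?thesis unfolding rM_def f_def g_def by simp
  qed
  have QX: "rQ X = rM (Inl ` X \<union> Inr ` A) - rM (Inr ` A)" if X: "X \<subseteq> E" for X
  proof -
    have "Lp (Inl ` X \<union> Inr ` A) = X" "Rp (Inl ` X \<union> Inr ` A) = A"
      "Lp (Inr ` A) = {}" "Rp (Inr ` A) = A" unfolding Lp_def Rp_def by auto
    moreover have "rQ X \<le> rL X" using D[of "{}" X] X L0 Q0 by simp
    ultimately show ?thesis unfolding rM_def f_def g_def using cardA L0 Q0 by simp
  qed
  show ?thesis unfolding quotient_def
    using MQr MLr finA Mr LX QX unfolding G_def by blast
qed



definition condC :: "'a set \<Rightarrow> ('a set \<Rightarrow> int) \<Rightarrow> bool" where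
  "condC E \<rho> \<longleftrightarrow> (\<forall>B e f. B \<subseteq> E \<and> e \<in> E \<and> f \<in> E \<and> e \<notin> B \<and> f \<notin> B \<and> e \<noteq> f
      \<and> \<rho> (insert e B) \<noteq> \<rho> (insert f B)
      \<longrightarrow> \<rho> (insert e (insert f B)) + \<rho> B = \<rho> (insert e B) + \<rho> (insert f B))"

lemma Qk_condC:
  assumes Q: "in_Qk k E \<rho>"
  shows "condC E \<rho>"
  unfolding condC_def
proof (intro allI impI, elim conjE)
  fix B e f
  assume BE: "B \<subseteq> E" and eE: "e \<in> E" and fE: "f \<in> E" and eB: "e \<notin> B" and fB: "f \<notin> B"
    and ef: "e \<noteq> f" and neq: "\<rho> (insert e B) \<noteq> \<rho> (insert f B)"
  obtain M where Mm: "\<And>i. i \<in> {1..k} \<Longrightarrow> matroid_rank E (M i)"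
    and Mq: "\<And>i. i \<in> {1..k-1} \<Longrightarrow> quotient E (M (Suc i)) (M i)"
    and Ms: "\<And>X. X \<subseteq> E \<Longrightarrow> \<rho> X = (\<Sum>i=1..k. M i X)"
    using Q unfolding in_Qk_def by blast
  define m where "m i x = M i (insert x B) - M i B" for i x
  define n where "n i = M i (insert e (insert f B)) - M i B" for i
  have eB': "insert e B \<subseteq> E" and fB': "insert f B \<subseteq> E" and efB: "insert e (insert f B) \<subseteq> E"
    using BE eE fE by auto
  have bnd: "0 \<le> m i x \<and> m i x \<le> 1" if "i \<in> {1..k}" "x \<in> E" for i x
    using matroid_marg[OF Mm[OF that(1)] BE that(2)] unfolding m_def by simp
  have nge: "m i e \<le> n i \<and> m i f \<le> n i" if "i \<in> {1..k}" for i
    using matroid_props(4)[OF Mm[OF that]] efB unfolding m_def n_def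
    by (metis insert_commute insert_mono subset_insertI diff_right_mono)
  have nle: "n i \<le> m i e + m i f" if "i \<in> {1..k}" for i
  proof -
    have "M i (insert e B \<union> insert f B) + M i (insert e B \<inter> insert f B) \<le> M i (insert e B) + M i (insert f B)"
      by (rule matroid_props(5)[OF Mm[OF that] eB' fB'])
    moreover have "insert e B \<union> insert f B = insert e (insert f B)" by blast
    moreover have "insert e B \<inter> insert f B = B" using ef eB fB by blast
    ultimately show ?thesis unfolding m_def n_def by simp
  qed
  have qm: "m (Suc i) x \<le> m i x" if "i \<in> {1..k-1}" "x \<in> E" for i x
  proof -
    have "insert x B \<subseteq> E" using BE that(2) by blast
    from quotient_D[OF Mq[OF that(1)] subset_insertI this] show ?thesis unfolding m_def by simp
  qed
  have qne: "n (Suc i) - m (Suc i) e \<le> n i - m i e" if "i \<in> {1..k-1}" for i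
  proof -
    have "insert e B \<subseteq> insert e (insert f B)" by blast
    from quotient_D[OF Mq[OF that(1)] this efB] show ?thesis unfolding m_def n_def by simp
  qed
  have qnf: "n (Suc i) - m (Suc i) f \<le> n i - m i f" if "i \<in> {1..k-1}" for i
  proof -
    have "insert f B \<subseteq> insert e (insert f B)" by blast
    from quotient_D[OF Mq[OF that(1)] this efB] show ?thesis unfolding m_def n_def by simp
  qed
  have sm: "\<rho> (insert x B) - \<rho> B = (\<Sum>i=1..k. m i x)" if "x \<in> E" for x
    using Ms[of "insert x B"] Ms[OF BE] that BE unfolding m_def by (simp add: sum_subtractf)
  have "(\<Sum>i=1..k. n i - m i e - m i f) = \<rho> (insert e (insert f B)) + \<rho> B - \<rho> (insert e B) - \<rho> (insert f B)"
    using Ms[OF efB] Ms[OF BE] Ms[OF eB'] Ms[OF fB'] unfolding m_def n_def by (simp add: sum_subtractf)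
  show "\<rho> (insert e (insert f B)) + \<rho> B = \<rho> (insert e B) + \<rho> (insert f B)"
  proof (rule ccontr)
    assume nm: "\<rho> (insert e (insert f B)) + \<rho> B \<noteq> \<rho> (insert e B) + \<rho> (insert f B)"
    have "(\<Sum>i=1..k. n i - m i e - m i f) \<noteq> 0" using nm \<open>(\<Sum>i=1..k. n i - m i e - m i f) = _\<close> by simp
    then obtain j where j: "j \<in> {1..k}" "n j - m j e - m j f \<noteq> 0" by (meson sum.neutral)
    have mj: "m j e = 1" "m j f = 1" "n j = 1"
      using j bnd[OF j(1) eE] bnd[OF j(1) fE] nge[OF j(1)] nle[OF j(1)] by auto
    have down: "t < j \<longrightarrow> m (j - t) e = 1 \<and> m (j - t) f = 1" for t
    proof (induction t)
      case 0 thus ?case using mj by simp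
    next
      case (Suc t)
      show ?case
      proof
        assume t: "Suc t < j"
        define i where "i = j - Suc t"
        have i1: "i \<in> {1..k-1}" "i \<in> {1..k}" using t j unfolding i_def by auto
        have si: "Suc i = j - t" using t unfolding i_def by simp
        have "m (Suc i) e = 1 \<and> m (Suc i) f = 1" using Suc.IH t si by simp
        thus "m (j - Suc t) e = 1 \<and> m (j - Suc t) f = 1"
          using qm[OF i1(1) eE] qm[OF i1(1) fE] bnd[OF i1(2) eE] bnd[OF i1(2) fE]
          unfolding i_def[symmetric] by simp
      qed
    qed
    have up: "j + t \<le> k \<longrightarrow> n (j + t) = m (j + t) e \<and> n (j + t) = m (j + t) f" for t
    proof (induction t)
      case 0 thus ?case using mj by simp
    next
      case (Suc t)
      show ?case
      proof
        assume t: "j + Suc t \<le> k"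
        define i where "i = j + t"
        have i1: "i \<in> {1..k-1}" "Suc i \<in> {1..k}" using t j unfolding i_def by auto
        have "n i = m i e \<and> n i = m i f" using Suc.IH t unfolding i_def by simp
        hence "n (Suc i) = m (Suc i) e \<and> n (Suc i) = m (Suc i) f"
          using qne[OF i1(1)] qnf[OF i1(1)] nge[OF i1(2)] by simp
        thus "n (j + Suc t) = m (j + Suc t) e \<and> n (j + Suc t) = m (j + Suc t) f"
          unfolding i_def by simp
      qed
    qed
    have allm: "m i e = m i f" if "i \<in> {1..k}" for i
    proof (cases "i \<le> j")
      case True
      hence "i = j - (j - i)" "j - i < j" using that by auto
      thus ?thesis using down[of "j - i"] by metis
    next
      case False
      hence "i = j + (i - j)" "j + (i - j) \<le> k" using that by auto
      thus ?thesis using up[of "i - j"] by metis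
    qed
    have "\<rho> (insert e B) - \<rho> B = \<rho> (insert f B) - \<rho> B"
    proof -
      have "(\<Sum>i=1..k. m i e) = (\<Sum>i=1..k. m i f)" by (rule sum.cong[OF refl allm])
      thus ?thesis using sm[OF eE] sm[OF fE] by simp
    qed
    thus False using neq by simp
  qed
qed



function rr :: "('a set \<Rightarrow> int) \<Rightarrow> nat \<Rightarrow> 'a set \<Rightarrow> int" where
  "rr \<rho> i X = (if finite X \<and> X \<noteq> {} then
      rr \<rho> i (X - {SOME x. x \<in> X}) + (if int i \<le> \<rho> X - \<rho> (X - {SOME x. x \<in> X}) then 1 else 0)
    else 0)"
  by pat_completeness auto
termination
proof (relation "measure (\<lambda>(\<rho>, i, X). card X)")
  fix \<rho> :: "'a set \<Rightarrow> int" and i :: nat and X :: "'a set"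
  assume "finite X \<and> X \<noteq> {}"
  hence a: "(SOME x. x \<in> X) \<in> X" "finite X" by (auto intro: someI_ex)
  hence "0 < card X" using card_gt_0_iff by blast
  thus "((\<rho>, i, X - {SOME x. x \<in> X}), \<rho>, i, X) \<in> measure (\<lambda>(\<rho>, i, X). card X)"
    using a by simp
qed auto

declare rr.simps[simp del]

lemma rr_empty: "rr \<rho> i {} = 0"
  by (simp add: rr.simps)

lemma swap_arith:
  fixes p q s t :: int
  assumes "q \<noteq> s \<Longrightarrow> p + t = q + s"
  shows "(if int i \<le> p - q then 1 else 0) + (if int i \<le> q - t then 1 else 0)
       = (if int i \<le> p - s then 1 else (0::int)) + (if int i \<le> s - t then 1 else 0)"
proof (cases "q = s")
  case True thus ?thesis by simp
next
  case False
  hence "p - q = s - t" "q - t = p - s" using assms by auto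
  thus ?thesis by simp
qed

lemma condCD:
  assumes "condC E \<rho>" "B \<subseteq> E" "e \<in> E" "f \<in> E" "e \<notin> B" "f \<notin> B" "e \<noteq> f"
    "\<rho> (insert e B) \<noteq> \<rho> (insert f B)"
  shows "\<rho> (insert e (insert f B)) + \<rho> B = \<rho> (insert e B) + \<rho> (insert f B)"
  using assms unfolding condC_def by blast

lemma rr_remove:
  assumes C: "condC E \<rho>" and fin: "finite X" and XE: "X \<subseteq> E" and x: "x \<in> X"
  shows "rr \<rho> i X = rr \<rho> i (X - {x}) + (if int i \<le> \<rho> X - \<rho> (X - {x}) then 1 else 0)"
  using fin XE x
proof (induction "card X" arbitrary: X x rule: less_induct)
  case less
  define y where "y = (SOME x. x \<in> X)"
  have yX: "y \<in> X" unfolding y_def using less.prems(3) by (auto intro: someI_ex)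
  have R: "rr \<rho> i X = rr \<rho> i (X - {y}) + (if int i \<le> \<rho> X - \<rho> (X - {y}) then 1 else 0)"
    using less.prems by (subst rr.simps) (auto simp: y_def[symmetric])
  show ?case
  proof (cases "x = y")
    case True thus ?thesis using R by simp
  next
    case False
    define B where "B = X - {x, y}"
    have B1: "X - {y} = insert x B" and B2: "X - {x} = insert y B" and B3: "X = insert x (insert y B)"
      and B4: "X - {y} - {x} = B" and B5: "X - {x} - {y} = B"
      using False yX less.prems(3) unfolding B_def by auto
    have c1: "card (X - {y}) < card X" by (rule card_Diff1_less[OF less.prems(1) yX])
    have c2: "card (X - {x}) < card X" by (rule card_Diff1_less[OF less.prems(1) less.prems(3)])
    have I1: "rr \<rho> i (X - {y}) = rr \<rho> i B + (if int i \<le> \<rho> (X - {y}) - \<rho> B then 1 else 0)"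
    proof -
      have h: "finite (X - {y})" "X - {y} \<subseteq> E" "x \<in> X - {y}" using less.prems False by auto
      show ?thesis using less.hyps[OF c1 h] unfolding B4 .
    qed
    have I2: "rr \<rho> i (X - {x}) = rr \<rho> i B + (if int i \<le> \<rho> (X - {x}) - \<rho> B then 1 else 0)"
    proof -
      have h: "finite (X - {x})" "X - {x} \<subseteq> E" "y \<in> X - {x}" using less.prems False yX by auto
      show ?thesis using less.hyps[OF c2 h] unfolding B5 .
    qed
    have "\<rho> (insert x B) \<noteq> \<rho> (insert y B) \<Longrightarrow> \<rho> (insert x (insert y B)) + \<rho> B = \<rho> (insert x B) + \<rho> (insert y B)"
    proof (rule condCD[OF C])
      show "B \<subseteq> E" "x \<in> E" "y \<in> E" "x \<notin> B" "y \<notin> B" "x \<noteq> y"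
        using less.prems(2,3) yX False unfolding B_def by auto
    qed
    hence "\<rho> (X - {y}) \<noteq> \<rho> (X - {x}) \<Longrightarrow> \<rho> X + \<rho> B = \<rho> (X - {y}) + \<rho> (X - {x})"
      unfolding B1 B2 B3[symmetric] by blast
    from swap_arith[of "\<rho> (X - {y})" "\<rho> (X - {x})" "\<rho> X" "\<rho> B", OF this, of i]
    show ?thesis using R I1 I2 by simp
  qed
qed

lemma rr_insert:
  assumes C: "condC E \<rho>" and fin: "finite E" and XE: "X \<subseteq> E" and xE: "x \<in> E" and xX: "x \<notin> X"
  shows "rr \<rho> i (insert x X) = rr \<rho> i X + (if int i \<le> \<rho> (insert x X) - \<rho> X then 1 else 0)"
proof -
  have f: "finite (insert x X)" using finite_subset[OF _ fin] XE xE by blast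
  have s: "insert x X \<subseteq> E" using XE xE by blast
  have d: "insert x X - {x} = X" using xX by blast
  show ?thesis using rr_remove[OF C f s insertI1, of i] unfolding d .
qed

lemma poly_props:
  assumes "polymatroid E r"
  shows "finite E" "r {} = 0"
    "\<And>X Y. X \<subseteq> Y \<Longrightarrow> Y \<subseteq> E \<Longrightarrow> r X \<le> r Y"
    "\<And>X Y. X \<subseteq> E \<Longrightarrow> Y \<subseteq> E \<Longrightarrow> r (X \<union> Y) + r (X \<inter> Y) \<le> r X + r Y"
  using assms unfolding polymatroid_def by blast+

lemma sum_ind_min:
  assumes "0 \<le> d"
  shows "(\<Sum>i=1..k. if int i \<le> d then 1 else 0 :: int) = min (int k) d"
proof (induction k)
  case 0 thus ?case using assms by simp
next
  case (Suc k)
  have "(\<Sum>i=1..Suc k. if int i \<le> d then 1 else 0 :: int) = (\<Sum>i=1..k. if int i \<le> d then 1 else 0 :: int) + (if int (Suc k) \<le> d then 1 else 0)"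
    by (rule sum.cl_ivl_Suc[THEN trans]) simp
  thus ?case using Suc.IH assms by auto
qed

lemma condC_Qk:
  assumes P: "k_polymatroid k E \<rho>" and C: "condC E \<rho>"
  shows "in_Qk k E \<rho>"
proof -
  have PP: "polymatroid E \<rho>" and kb: "\<And>e. e \<in> E \<Longrightarrow> \<rho> {e} \<le> int k"
    using P unfolding k_polymatroid_def by auto
  note pp = poly_props[OF PP]
  have fin: "finite E" by (rule pp(1))
  have dl: "0 \<le> \<rho> (insert x X) - \<rho> X \<and> \<rho> (insert x X) - \<rho> X \<le> int k"
    if XE: "X \<subseteq> E" and xE: "x \<in> E" and xX: "x \<notin> X" for X x
  proof -
    have s1: "insert x X \<subseteq> E" "{x} \<subseteq> E" using XE xE by auto
    have "\<rho> X \<le> \<rho> (insert x X)" by (rule pp(3)[OF subset_insertI s1(1)])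
    moreover have "\<rho> (X \<union> {x}) + \<rho> (X \<inter> {x}) \<le> \<rho> X + \<rho> {x}" by (rule pp(4)[OF XE s1(2)])
    moreover have "X \<inter> {x} = {}" "X \<union> {x} = insert x X" using xX by auto
    ultimately show ?thesis using kb[OF xE] pp(2) by simp
  qed
  have dloc: "\<rho> (insert x Y) - \<rho> Y \<le> \<rho> (insert x X) - \<rho> X"
    if "X \<subseteq> Y" "Y \<subseteq> E" "x \<in> E" "x \<notin> Y" for X Y x
  proof -
    have s1: "insert x X \<subseteq> E" using that by blast
    have "\<rho> (insert x X \<union> Y) + \<rho> (insert x X \<inter> Y) \<le> \<rho> (insert x X) + \<rho> Y"
      by (rule pp(4)[OF s1 that(2)])
    moreover have "insert x X \<union> Y = insert x Y" "insert x X \<inter> Y = X" using that by auto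
    ultimately show ?thesis by simp
  qed
  have ins: "rr \<rho> i (insert x X) = rr \<rho> i X + (if int i \<le> \<rho> (insert x X) - \<rho> X then 1 else 0)"
    if "X \<subseteq> E" "x \<in> E" "x \<notin> X" for i X x
    by (rule rr_insert[OF C fin that])
  have mat: "matroid_rank E (rr \<rho> i)" for i
  proof (rule matroid_from_marg[where f="rr \<rho> i", OF fin rr_empty[of \<rho> i]])
    fix X x assume h: "X \<subseteq> E" "x \<in> E" "x \<notin> X"
    show "rr \<rho> i (insert x X) = rr \<rho> i X \<or> rr \<rho> i (insert x X) = rr \<rho> i X + 1"
      using ins[OF h, of i] by auto
  next
    fix X Y x assume h: "X \<subseteq> Y" "Y \<subseteq> E" "x \<in> E" "x \<notin> Y"
    have h2: "X \<subseteq> E" "x \<notin> X" using h by auto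
    show "rr \<rho> i (insert x Y) - rr \<rho> i Y \<le> rr \<rho> i (insert x X) - rr \<rho> i X"
      using ins[OF h(2,3,4), of i] ins[OF h2(1) h(3) h2(2), of i] dloc[OF h] by auto
  qed
  have quo: "quotient E (rr \<rho> (Suc i)) (rr \<rho> i)" for i
  proof (rule quotient_intro[OF mat mat])
    fix X Y assume XY: "X \<subseteq> Y" and YE: "Y \<subseteq> E"
    show "rr \<rho> i X - rr \<rho> (Suc i) X \<le> rr \<rho> i Y - rr \<rho> (Suc i) Y"
    proof (rule mono_from_marg[where g="\<lambda>X. rr \<rho> i X - rr \<rho> (Suc i) X", OF _ fin XY YE])
      fix Z z assume h: "Z \<subseteq> E" "z \<in> E" "z \<notin> Z"
      show "rr \<rho> i Z - rr \<rho> (Suc i) Z \<le> rr \<rho> i (insert z Z) - rr \<rho> (Suc i) (insert z Z)"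
        using ins[OF h, of i] ins[OF h, of "Suc i"] by auto
    qed
  qed
  have sm: "\<rho> X = (\<Sum>i=1..k. rr \<rho> i X)" if XE: "X \<subseteq> E" for X
  proof -
    have "finite X" using finite_subset[OF XE fin] .
    thus ?thesis using XE
    proof (induction X rule: finite_induct)
      case empty thus ?case using pp(2) by (simp add: rr_empty)
    next
      case (insert x X)
      have h: "X \<subseteq> E" "x \<in> E" "x \<notin> X" using insert by auto
      have "(\<Sum>i=1..k. rr \<rho> i (insert x X)) = (\<Sum>i=1..k. rr \<rho> i X + (if int i \<le> \<rho> (insert x X) - \<rho> X then 1 else 0))"
        by (rule sum.cong[OF refl]) (rule ins[OF h])
      also have "\<dots> = (\<Sum>i=1..k. rr \<rho> i X) + (\<Sum>i=1..k. (if int i \<le> \<rho> (insert x X) - \<rho> X then 1 else 0))"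
        by (rule sum.distrib)
      also have "(\<Sum>i=1..k. (if int i \<le> \<rho> (insert x X) - \<rho> X then 1 else 0)) = \<rho> (insert x X) - \<rho> X"
        using sum_ind_min[of "\<rho> (insert x X) - \<rho> X" k] dl[OF h] by simp
      finally show ?case using insert.IH h(1) by simp
    qed
  qed
  show ?thesis unfolding in_Qk_def
    by (rule exI[of _ "\<lambda>i. rr \<rho> i"]) (use mat quo sm in auto)
qed



lemma kpoly_intro:
  assumes "finite E" "\<rho> {} = 0" "\<And>X Y. X \<subseteq> Y \<Longrightarrow> Y \<subseteq> E \<Longrightarrow> \<rho> X \<le> \<rho> Y"
    "\<And>X Y. X \<subseteq> E \<Longrightarrow> Y \<subseteq> E \<Longrightarrow> \<rho> (X \<union> Y) + \<rho> (X \<inter> Y) \<le> \<rho> X + \<rho> Y"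
    "\<And>e. e \<in> E \<Longrightarrow> \<rho> {e} \<le> int k"
  shows "k_polymatroid k E \<rho>"
  unfolding k_polymatroid_def polymatroid_def
  apply (intro conjI allI impI ballI)
      apply (rule assms(1))
     apply (rule assms(2))
    apply (erule conjE, erule (1) assms(3))
   apply (erule conjE, erule (1) assms(4))
  apply (erule assms(5))
  done

lemma rhoA_vals:
  "rhoA a b c {} = 0" "rhoA a b c {True} = int b" "rhoA a b c {False} = int c"
  "rhoA a b c UNIV = int a + int c" "rhoA a b c {True, False} = int a + int c"
  "rhoA a b c {False, True} = int a + int c"
  unfolding rhoA_def by (auto simp: UNIV_bool)

lemma bool_subsets: "(X :: bool set) = {} \<or> X = {True} \<or> X = {False} \<or> X = {True, False}"
  by (cases "True \<in> X"; cases "False \<in> X") (auto; metis (full_types))+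

lemma two_subsets:
  assumes "X \<subseteq> {e, f}"
  shows "X = {} \<or> X = {e} \<or> X = {f} \<or> X = {e, f}"
  using assms by (cases "e \<in> X"; cases "f \<in> X") auto

lemma rhoA_kpoly:
  assumes "a < b" "b < c" "c \<le> k"
  shows "k_polymatroid k (UNIV :: bool set) (rhoA a b c)"
proof -
  have mono: "rhoA a b c X \<le> rhoA a b c Y" if "X \<subseteq> Y" for X Y
    using bool_subsets[of X] bool_subsets[of Y] that assms
    by (elim disjE) (simp_all add: rhoA_vals insert_commute)
  have sub: "rhoA a b c (X \<union> Y) + rhoA a b c (X \<inter> Y) \<le> rhoA a b c X + rhoA a b c Y" for X Y
    using bool_subsets[of X] bool_subsets[of Y] assms
    by (elim disjE) (simp_all add: rhoA_vals insert_commute)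
  have kb: "rhoA a b c {e} \<le> int k" for e
    using assms by (cases e) (simp_all add: rhoA_vals)
  show ?thesis by (rule kpoly_intro[OF _ _ mono sub kb]) (simp_all add: rhoA_vals)
qed

lemma iso_transfer:
  assumes "poly_iso E \<rho> E' \<rho>'" "k_polymatroid k E' \<rho>'"
  shows "k_polymatroid k E \<rho>"
proof -
  obtain \<phi> where bij: "bij_betw \<phi> E E'" and v: "\<And>X. X \<subseteq> E \<Longrightarrow> \<rho> X = \<rho>' (\<phi> ` X)"
    using assms(1) unfolding poly_iso_def by blast
  have P: "polymatroid E' \<rho>'" and kb: "\<And>e. e \<in> E' \<Longrightarrow> \<rho>' {e} \<le> int k"
    using assms(2) unfolding k_polymatroid_def by auto
  note pp = poly_props[OF P]
  have inj: "inj_on \<phi> E" and im: "\<phi> ` E = E'" using bij by (auto simp: bij_betw_def)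
  have fin: "finite E" using bij pp(1) bij_betw_finite by blast
  have e0: "\<rho> {} = 0" using v[of "{}"] pp(2) by simp
  have mo: "\<rho> X \<le> \<rho> Y" if "X \<subseteq> Y" "Y \<subseteq> E" for X Y
  proof -
    have "\<phi> ` X \<subseteq> \<phi> ` Y" "\<phi> ` Y \<subseteq> E'" using that im by auto
    thus ?thesis using pp(3) v[of X] v[of Y] that by simp
  qed
  have sm: "\<rho> (X \<union> Y) + \<rho> (X \<inter> Y) \<le> \<rho> X + \<rho> Y" if "X \<subseteq> E" "Y \<subseteq> E" for X Y
  proof -
    have "\<phi> ` X \<subseteq> E'" "\<phi> ` Y \<subseteq> E'" using that im by auto
    hence "\<rho>' (\<phi> ` X \<union> \<phi> ` Y) + \<rho>' (\<phi> ` X \<inter> \<phi> ` Y) \<le> \<rho>' (\<phi> ` X) + \<rho>' (\<phi> ` Y)" by (rule pp(4))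
    moreover have "\<phi> ` (X \<union> Y) = \<phi> ` X \<union> \<phi> ` Y" by (rule image_Un)
    moreover have "\<phi> ` (X \<inter> Y) = \<phi> ` X \<inter> \<phi> ` Y"
      using inj that by (meson inj_on_image_Int)
    moreover have "X \<union> Y \<subseteq> E" "X \<inter> Y \<subseteq> E" using that by auto
    ultimately show ?thesis using v[of X] v[of Y] v[of "X \<union> Y"] v[of "X \<inter> Y"] that by simp
  qed
  have kbE: "\<rho> {e} \<le> int k" if "e \<in> E" for e
    using v[of "{e}"] kb[of "\<phi> e"] that im by auto
  show ?thesis by (rule kpoly_intro[OF fin e0 mo sm kbE])
qed

lemma minor_kpoly:
  assumes P: "k_polymatroid k E \<rho>" and BE: "B \<subseteq> E" and E': "E' \<subseteq> E - B"
  shows "k_polymatroid k E' (minor_rank \<rho> B)"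
proof -
  have PP: "polymatroid E \<rho>" and kb: "\<And>e. e \<in> E \<Longrightarrow> \<rho> {e} \<le> int k"
    using P unfolding k_polymatroid_def by auto
  note pp = poly_props[OF PP]
  have fin: "finite E'" using finite_subset[OF _ pp(1)] E' by blast
  have mo: "minor_rank \<rho> B X \<le> minor_rank \<rho> B Y" if "X \<subseteq> Y" "Y \<subseteq> E'" for X Y
  proof -
    have "X \<union> B \<subseteq> Y \<union> B" "Y \<union> B \<subseteq> E" using that E' BE by auto
    thus ?thesis unfolding minor_rank_def using pp(3) by simp
  qed
  have sm: "minor_rank \<rho> B (X \<union> Y) + minor_rank \<rho> B (X \<inter> Y) \<le> minor_rank \<rho> B X + minor_rank \<rho> B Y"
    if "X \<subseteq> E'" "Y \<subseteq> E'" for X Y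
  proof -
    have s: "X \<union> B \<subseteq> E" "Y \<union> B \<subseteq> E" using that E' BE by auto
    have "\<rho> ((X \<union> B) \<union> (Y \<union> B)) + \<rho> ((X \<union> B) \<inter> (Y \<union> B)) \<le> \<rho> (X \<union> B) + \<rho> (Y \<union> B)"
      by (rule pp(4)[OF s])
    moreover have "(X \<union> B) \<union> (Y \<union> B) = (X \<union> Y) \<union> B" "(X \<union> B) \<inter> (Y \<union> B) = (X \<inter> Y) \<union> B" by auto
    ultimately show ?thesis unfolding minor_rank_def by simp
  qed
  have kbE: "minor_rank \<rho> B {e} \<le> int k" if "e \<in> E'" for e
  proof -
    have s: "B \<subseteq> E" "{e} \<subseteq> E" using that E' BE by auto
    have "\<rho> (B \<union> {e}) + \<rho> (B \<inter> {e}) \<le> \<rho> B + \<rho> {e}" by (rule pp(4)[OF s])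
    moreover have "\<rho> (B \<inter> {e}) \<ge> 0" using pp(2) pp(3)[of "{}" "B \<inter> {e}"] BE by auto
    moreover have "B \<union> {e} = {e} \<union> B" by auto
    ultimately show ?thesis unfolding minor_rank_def using kb[of e] s by auto
  qed
  show ?thesis by (rule kpoly_intro[OF fin _ mo sm kbE]) (simp add: minor_rank_def)
qed



lemma two_elem_iso:
  assumes E: "E = {e, f}" and ef: "e \<noteq> f" and r0: "\<rho> {} = 0" and lt: "\<rho> {e} < \<rho> {f}"
    and ck: "\<rho> {f} \<le> int k" and m1: "\<rho> {f} \<le> \<rho> {e, f}" and nm: "\<rho> {e, f} < \<rho> {e} + \<rho> {f}"
    and e0: "0 \<le> \<rho> {e}"
  shows "\<exists>a b c. a < b \<and> b < c \<and> c \<le> k \<and> poly_iso E \<rho> (UNIV :: bool set) (rhoA a b c)"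
proof -
  define a where "a = nat (\<rho> {e, f} - \<rho> {f})"
  define b where "b = nat (\<rho> {e})"
  define c where "c = nat (\<rho> {f})"
  have ia: "int a = \<rho> {e, f} - \<rho> {f}" and ib: "int b = \<rho> {e}" and ic: "int c = \<rho> {f}"
    using m1 e0 lt unfolding a_def b_def c_def by auto
  have abc: "a < b" "b < c" "c \<le> k" using ia ib ic nm lt ck by linarith+
  define \<phi> where "\<phi> x = (x = e)" for x
  have pe: "\<phi> e = True" and pf: "\<phi> f = False" unfolding \<phi>_def using ef by auto
  have inj: "inj_on \<phi> E" unfolding inj_on_def E using pe pf by auto
  have im: "\<phi> ` E = UNIV" unfolding E using pe pf by (simp add: UNIV_bool insert_commute)
  have bij: "bij_betw \<phi> E (UNIV :: bool set)" using inj im by (simp add: bij_betw_def)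
  have v: "\<rho> X = rhoA a b c (\<phi> ` X)" if "X \<subseteq> E" for X
  proof -
    have "X \<subseteq> {e, f}" using that unfolding E .
    hence "X = {} \<or> X = {e} \<or> X = {f} \<or> X = {e, f}" by (rule two_subsets)
    thus ?thesis
    proof (elim disjE)
      assume "X = {}" thus ?thesis using r0 by (simp add: rhoA_vals)
    next
      assume "X = {e}" thus ?thesis using ib pe by (simp add: rhoA_vals)
    next
      assume "X = {f}" thus ?thesis using ic pf by (simp add: rhoA_vals)
    next
      assume "X = {e, f}" thus ?thesis using ia ic pe pf by (simp add: rhoA_vals)
    qed
  qed
  show ?thesis using abc bij v unfolding poly_iso_def by blast
qed

lemma dir1:
  fixes k :: nat and E :: "'a set" and \<rho> :: "'a set \<Rightarrow> int"
  assumes X: "excluded_minor_Qk k E \<rho>"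
  shows "\<exists>a b c. a < b \<and> b < c \<and> c \<le> k \<and> poly_iso E \<rho> (UNIV :: bool set) (rhoA a b c)"
proof -
  have KP: "k_polymatroid k E \<rho>" and nQ: "\<not> in_Qk k E \<rho>"
    and mins: "\<And>A B. A \<subseteq> E \<Longrightarrow> B \<subseteq> E \<Longrightarrow> A \<inter> B = {} \<Longrightarrow> A \<union> B \<noteq> {} \<Longrightarrow>
                  in_Qk k (E - (A \<union> B)) (minor_rank \<rho> B)"
    using X unfolding excluded_minor_Qk_def by blast+
  have PP: "polymatroid E \<rho>" and kb: "\<And>e. e \<in> E \<Longrightarrow> \<rho> {e} \<le> int k"
    using KP unfolding k_polymatroid_def by auto
  note pp = poly_props[OF PP]
  have "\<not> condC E \<rho>" using condC_Qk[OF KP] nQ by blast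
  then obtain B e f where BE: "B \<subseteq> E" and eE: "e \<in> E" and fE: "f \<in> E" and eB: "e \<notin> B" and fB: "f \<notin> B"
    and ef: "e \<noteq> f" and neq: "\<rho> (insert e B) \<noteq> \<rho> (insert f B)"
    and nm: "\<rho> (insert e (insert f B)) + \<rho> B \<noteq> \<rho> (insert e B) + \<rho> (insert f B)"
    unfolding condC_def by blast
  define A where "A = E - insert e (insert f B)"
  have AB: "A \<union> B = {}"
  proof (rule ccontr)
    assume ne: "A \<union> B \<noteq> {}"
    have h: "A \<subseteq> E" "A \<inter> B = {}" unfolding A_def by blast+
    have Q: "in_Qk k (E - (A \<union> B)) (minor_rank \<rho> B)" by (rule mins[OF h(1) BE h(2) ne])
    have EE: "E - (A \<union> B) = {e, f}" using eE fE eB fB BE unfolding A_def by blast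
    have C: "condC {e, f} (minor_rank \<rho> B)" using Qk_condC[OF Q] unfolding EE .
    have m1: "minor_rank \<rho> B (insert e {}) = \<rho> (insert e B) - \<rho> B"
      and m2: "minor_rank \<rho> B (insert f {}) = \<rho> (insert f B) - \<rho> B"
      and m3: "minor_rank \<rho> B (insert e (insert f {})) = \<rho> (insert e (insert f B)) - \<rho> B"
      and m4: "minor_rank \<rho> B {} = 0"
      unfolding minor_rank_def by simp_all
    have "minor_rank \<rho> B (insert e (insert f {})) + minor_rank \<rho> B {}
          = minor_rank \<rho> B (insert e {}) + minor_rank \<rho> B (insert f {})"
    proof (rule condCD[OF C])
      show "minor_rank \<rho> B (insert e {}) \<noteq> minor_rank \<rho> B (insert f {})" unfolding m1 m2 using neq by simp
    qed (use ef in blast)+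
    thus False using nm unfolding m1 m2 m3 m4 by simp
  qed
  hence B0: "B = {}" and "A = {}" by blast+
  hence E2: "E = {e, f}" using eE fE unfolding A_def by blast
  have r0: "\<rho> {} = 0" by (rule pp(2))
  have s: "{e} \<subseteq> {e, f}" "{f} \<subseteq> {e, f}" "{e, f} \<subseteq> E" "{} \<subseteq> {e}" using E2 by auto
  have s2: "{e} \<subseteq> E" "{f} \<subseteq> E" "{} \<subseteq> {f}" using E2 by auto
  have mo: "\<rho> {e} \<le> \<rho> {e, f}" "\<rho> {f} \<le> \<rho> {e, f}" "0 \<le> \<rho> {e}" "0 \<le> \<rho> {f}"
    using pp(3)[OF s(1) s(3)] pp(3)[OF s(2) s(3)] pp(3)[OF s(4) s2(1)] pp(3)[OF s2(3) s2(2)] r0 by simp_all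
  have sub: "\<rho> {e, f} \<le> \<rho> {e} + \<rho> {f}"
  proof -
    have "\<rho> ({e} \<union> {f}) + \<rho> ({e} \<inter> {f}) \<le> \<rho> {e} + \<rho> {f}" by (rule pp(4)[OF s2(1,2)])
    moreover have "{e} \<union> {f} = {e, f}" "{e} \<inter> {f} = {}" using ef by auto
    ultimately show ?thesis using r0 by simp
  qed
  have nm': "\<rho> {e, f} \<noteq> \<rho> {e} + \<rho> {f}" using nm r0 unfolding B0 by simp
  have neq': "\<rho> {e} \<noteq> \<rho> {f}" using neq unfolding B0 .
  have ke: "\<rho> {e} \<le> int k" "\<rho> {f} \<le> int k" using kb[OF eE] kb[OF fE] by simp_all
  show ?thesis
  proof (cases "\<rho> {e} < \<rho> {f}")
    case True
    show ?thesis by (rule two_elem_iso[OF E2 ef r0 True ke(2) mo(2)]) (use sub nm' mo in simp_all)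
  next
    case False
    hence lt: "\<rho> {f} < \<rho> {e}" using neq' by simp
    have E2': "E = {f, e}" using E2 by blast
    have "{f, e} = {e, f}" by blast
    hence r: "\<rho> {f, e} = \<rho> {e, f}" by simp
    show ?thesis by (rule two_elem_iso[OF E2' ef[symmetric] r0 lt ke(1)]) (use sub nm' mo r in simp_all)
  qed
qed

lemma dir2:
  fixes k :: nat and E :: "'a set" and \<rho> :: "'a set \<Rightarrow> int"
  assumes "\<exists>a b c. a < b \<and> b < c \<and> c \<le> k \<and> poly_iso E \<rho> (UNIV :: bool set) (rhoA a b c)"
  shows "excluded_minor_Qk k E \<rho>"
proof -
  from assms obtain a b c where abc: "a < b" "b < c" "c \<le> k" and iso: "poly_iso E \<rho> (UNIV :: bool set) (rhoA a b c)"
    by blast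
  have KP: "k_polymatroid k E \<rho>" by (rule iso_transfer[OF iso rhoA_kpoly[OF abc]])
  obtain \<phi> where bij: "bij_betw \<phi> E (UNIV :: bool set)" and v: "\<And>X. X \<subseteq> E \<Longrightarrow> \<rho> X = rhoA a b c (\<phi> ` X)"
    using iso unfolding poly_iso_def by blast
  have inj: "inj_on \<phi> E" and im: "\<phi> ` E = UNIV" using bij by (simp_all add: bij_betw_def)
  have "True \<in> \<phi> ` E" "False \<in> \<phi> ` E" unfolding im by simp_all
  then obtain e f where eE: "e \<in> E" and fE: "f \<in> E" and pe: "\<phi> e = True" and pf: "\<phi> f = False"
    by (metis imageE)
  have ef: "e \<noteq> f" using pe pf by auto
  have E2: "E = {e, f}"
  proof -
    have "x = e \<or> x = f" if "x \<in> E" for x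
    proof (cases "\<phi> x")
      case True
      hence "\<phi> x = \<phi> e" using pe by simp
      thus ?thesis using inj_onD[OF inj _ that eE] by blast
    next
      case False
      hence "\<phi> x = \<phi> f" using pf by simp
      thus ?thesis using inj_onD[OF inj _ that fE] by blast
    qed
    thus ?thesis using eE fE by blast
  qed
  have s: "{} \<subseteq> E" "{e} \<subseteq> E" "{f} \<subseteq> E" "{e, f} \<subseteq> E" using E2 by auto
  have vals: "\<rho> {} = 0" "\<rho> {e} = int b" "\<rho> {f} = int c" "\<rho> {e, f} = int a + int c"
    using v[OF s(1)] v[OF s(2)] v[OF s(3)] v[OF s(4)] pe pf by (simp_all add: rhoA_vals)
  have nQ: "\<not> in_Qk k E \<rho>"
  proof
    assume "in_Qk k E \<rho>"
    hence C: "condC E \<rho>" by (rule Qk_condC)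
    have "\<rho> (insert e (insert f {})) + \<rho> {} = \<rho> (insert e {}) + \<rho> (insert f {})"
    proof (rule condCD[OF C])
      show "\<rho> (insert e {}) \<noteq> \<rho> (insert f {})" using vals abc by simp
    qed (use eE fE ef in blast)+
    thus False using vals abc by simp
  qed
  have mins: "in_Qk k (E - (A \<union> B)) (minor_rank \<rho> B)"
    if "A \<subseteq> E" "B \<subseteq> E" "A \<inter> B = {}" "A \<union> B \<noteq> {}" for A B
  proof (rule condC_Qk)
    show "k_polymatroid k (E - (A \<union> B)) (minor_rank \<rho> B)"
      by (rule minor_kpoly[OF KP that(2)]) blast
    show "condC (E - (A \<union> B)) (minor_rank \<rho> B)"
      unfolding condC_def
    proof (intro allI impI, elim conjE)
      fix B' e' f' assume "e' \<in> E - (A \<union> B)" "f' \<in> E - (A \<union> B)" "e' \<noteq> f'"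
      hence "E - (A \<union> B) = E" using E2 by blast
      hence False using that by blast
      thus "minor_rank \<rho> B (insert e' (insert f' B')) + minor_rank \<rho> B B' =
            minor_rank \<rho> B (insert e' B') + minor_rank \<rho> B (insert f' B')" ..
    qed
  qed
  show ?thesis unfolding excluded_minor_Qk_def
  proof (intro conjI allI impI)
    fix A B assume "A \<subseteq> E \<and> B \<subseteq> E \<and> A \<inter> B = {} \<and> A \<union> B \<noteq> {}"
    thus "in_Qk k (E - (A \<union> B)) (minor_rank \<rho> B)" using mins by blast
  qed (rule KP, rule nQ)
qed


lemma count3: "card {(a, b, c). (a::nat) < b \<and> b < c \<and> c \<le> k} = (k + 1) choose 3"
proof -
  let ?T = "{(a, b, c). (a::nat) < b \<and> b < c \<and> c \<le> k}"
  let ?S = "{S. S \<subseteq> {0..k} \<and> card S = 3}"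
  have "bij_betw (\<lambda>(a,b,c). {a,b,c}) ?T ?S"
  proof (rule bij_betwI')
    fix x y assume "x \<in> ?T" "y \<in> ?T"
    then obtain a b c a' b' c' where x: "x = (a,b,c)" "a<b" "b<c" and y: "y = (a',b',c')" "a'<b'" "b'<c'" by auto
    show "((\<lambda>(a,b,c). {a,b,c}) x = (\<lambda>(a,b,c). {a,b,c}) y) = (x = y)"
    proof
      assume h: "(\<lambda>(a,b,c). {a,b,c}) x = (\<lambda>(a,b,c). {a,b,c}) y"
      hence e: "{a,b,c} = {a',b',c'}" using x y by simp
      have "a \<in> {a',b',c'}" "b \<in> {a',b',c'}" "c \<in> {a',b',c'}"
           "a' \<in> {a,b,c}" "b' \<in> {a,b,c}" "c' \<in> {a,b,c}" using e by blast+
      thus "x = y" using x y by auto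
    qed simp
  next
    fix x assume "x \<in> ?T" thus "(\<lambda>(a,b,c). {a,b,c}) x \<in> ?S" by (auto simp: card_insert_if)
  next
    fix S assume "S \<in> ?S"
    then obtain x y z where S: "S = {x,y,z}" "x \<noteq> y" "y \<noteq> z" "x \<noteq> z" and sub: "S \<subseteq> {0..k}"
      by (auto simp: card_3_iff)
    have "x < y \<and> y < z \<or> x < z \<and> z < y \<or> y < x \<and> x < z \<or> y < z \<and> z < x \<or> z < x \<and> x < y \<or> z < y \<and> y < x"
      using S by linarith
    thus "\<exists>t\<in>?T. S = (\<lambda>(a,b,c). {a,b,c}) t" using S sub
      apply (elim disjE conjE)
      apply (rule bexI[of _ "(x,y,z)"]; auto)
      apply (rule bexI[of _ "(x,z,y)"]; auto)
      apply (rule bexI[of _ "(y,x,z)"]; auto)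
      apply (rule bexI[of _ "(y,z,x)"]; auto)
      apply (rule bexI[of _ "(z,x,y)"]; auto)
      apply (rule bexI[of _ "(z,y,x)"]; auto)
      done
  qed
  hence "card ?T = card ?S" by (rule bij_betw_same_card)
  also have "\<dots> = (k+1) choose 3" by (subst n_subsets) auto
  finally show ?thesis .
qed

theorem theorem5p2:
  fixes k :: nat and E :: "'a set" and \<rho> :: "'a set \<Rightarrow> int"
  assumes "k \<ge> 2"
  shows "(excluded_minor_Qk k E \<rho> \<longleftrightarrow>
            (\<exists>a b c. a < b \<and> b < c \<and> c \<le> k \<and> poly_iso E \<rho> (UNIV :: bool set) (rhoA a b c)))
       \<and> (\<forall>a b c a' b' c'. a < b \<and> b < c \<and> c \<le> k \<and> a' < b' \<and> b' < c' \<and> c' \<le> k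
             \<and> poly_iso (UNIV :: bool set) (rhoA a b c) (UNIV :: bool set) (rhoA a' b' c')
             \<longrightarrow> (a, b, c) = (a', b', c'))
       \<and> card {(a, b, c). a < b \<and> b < c \<and> c \<le> k} = (k + 1) choose 3"
proof (intro conjI)
  show "excluded_minor_Qk k E \<rho> \<longleftrightarrow>
            (\<exists>a b c. a < b \<and> b < c \<and> c \<le> k \<and> poly_iso E \<rho> (UNIV :: bool set) (rhoA a b c))"
    using dir1[of k E \<rho>] dir2[of k E \<rho>] by blast
next
  show "card {(a, b, c). a < b \<and> b < c \<and> c \<le> k} = (k + 1) choose 3" by (rule count3)
next
  show "\<forall>a b c a' b' c'. a < b \<and> b < c \<and> c \<le> k \<and> a' < b' \<and> b' < c' \<and> c' \<le> k
             \<and> poly_iso (UNIV :: bool set) (rhoA a b c) (UNIV :: bool set) (rhoA a' b' c')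
             \<longrightarrow> (a, b, c) = (a', b', c')"
  proof (intro allI impI, elim conjE)
    fix a b c a' b' c' :: nat
    assume lt: "a < b" "b < c" "a' < b'" "b' < c'"
      and iso: "poly_iso (UNIV :: bool set) (rhoA a b c) (UNIV :: bool set) (rhoA a' b' c')"
    obtain \<phi> where bij: "bij_betw \<phi> (UNIV :: bool set) (UNIV :: bool set)"
      and v: "\<And>X. rhoA a b c X = rhoA a' b' c' (\<phi> ` X)"
      using iso unfolding poly_iso_def by blast
    have inj: "inj \<phi>" and im: "\<phi> ` UNIV = UNIV" using bij by (simp_all add: bij_betw_def)
    have ne: "\<phi> True \<noteq> \<phi> False" using inj by (metis (full_types) injD)
    have v1: "int b = rhoA a' b' c' {\<phi> True}" using v[of "{True}"] by (simp add: rhoA_vals)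
    have v2: "int c = rhoA a' b' c' {\<phi> False}" using v[of "{False}"] by (simp add: rhoA_vals)
    have v3: "int a + int c = int a' + int c'" using v[of UNIV] unfolding im by (simp add: rhoA_vals)
    show "(a, b, c) = (a', b', c')"
    proof (cases "\<phi> True")
      case True
      hence "\<phi> False = False" using ne by (metis (full_types))
      thus ?thesis using v1 v2 v3 True by (simp add: rhoA_vals)
    next
      case False
      hence "\<phi> False = True" using ne by (metis (full_types))
      hence "int b = int c'" "int c = int b'" using v1 v2 False by (simp_all add: rhoA_vals)
      thus ?thesis using lt by simp
    qed
  qed
qed

end
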